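(* Let $q\ge2$, let $0<R<1$ and let $l$ be an integer with $l>\frac{2}{1-R}$. Then there exist a sequence $n_i\to\infty$ and, for each $i$, a deterministic IDF code over $l$ blocks for $\Pi^q_{n_i}$ with $M_i\ge 2^{q^{R l n_i}}$ messages, type-I error probability $0$ and type-II error probability $\lambda_{2,i}$, such that $\lambda_{2,i}\to0$.
   Context: Fix an integer $q\ge 2$, $\mathcal A_q=\{1,\dots,q\}$. For $n\ge1$ and $\sigma\in S_n$, $\sigma\mathbf x=(x_{\sigma^{-1}(1)},\dots,x_{\sigma^{-1}(n)})$ for $\mathbf x\in\mathcal A_q^n$; the $n$-block $q$-ary uniform permutation channel $\Pi^q_n$ has input/output alphabet $\mathcal A_q^n$ and $\Pi^q_n(\mathbf y\mid\mathbf x)=\frac1{n!}\sum_{\sigma\in S_n}\mathbf 1\{\mathbf y=\sigma\mathbf x\}$. An identification-feedback (IDF) code over $l$ blocks with $M$ messages for $\Pi^q_n$ (with block-wise noiseless feedback) is a family $\{(\mathbb Q_{i,1},\dots,\mathbb Q_{i,l},\mathcal D_i)\}_{i=1}^M$ where $\mathbb Q_{i,j}(\mathbf x^{(j)}\mid \mathbf y^{(1)},\dots,\mathbf y^{(j-1)},\mathbf x^{(1)},\dots,\mathbf x^{(j-1)})$ is a conditional probability distribution on $\mathcal A_q^n$ given the previous output blocks (fed back) and previous input blocks, and $\mathcal D_i\subseteq(\mathcal A_q^n)^l$. When message $i$ is sent, the blocks have joint law $\mathbb P^{(i)}(\underline{\mathbf x},\underline{\mathbf y})=\prod_{j=1}^l\mathbb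 Q_{i,j}(\mathbf x^{(j)}\mid\mathbf y^{(1)},\dots,\mathbf y^{(j-1)},\mathbf x^{(1)},\dots,\mathbf x^{(j-1)})\,\Pi^q_n(\mathbf y^{(j)}\mid\mathbf x^{(j)})$. The code is deterministic if each $\mathbb Q_{i,j}$ is a point mass given by a function $\mathbf f_{i,j}$ of the past blocks. Error probabilities: $\lambda_{i\to j}=\mathbb P^{(i)}(\underline{\mathbf y}\in\mathcal D_j)$ for $i\ne j$, $\lambda_{i\not\to i}=\mathbb P^{(i)}(\underline{\mathbf y}\notin\mathcal D_i)$, type-I error $\lambda_1=\max_i\lambda_{i\not\to i}$, type-II error $\lambda_2=\max_{i\neq j}\lambda_{i\to j}$. *)

theory Defs
  imports "HOL-Analysis.Analysis" "HOL-Combinatorics.Permutations"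
begin

definition blocks :: "nat \<Rightarrow> nat \<Rightarrow> nat list set" where
  "blocks q n = {x. length x = n \<and> set x \<subseteq> {1..q}}"

definition block_seqs :: "nat \<Rightarrow> nat \<Rightarrow> nat \<Rightarrow> nat list list set" where
  "block_seqs q n l = {xs. length xs = l \<and> set xs \<subseteq> blocks q n}"

text \<open>sigma x = (x_{sigma^-1(1)},...,x_{sigma^-1(n)}), i.e. position i receives x ! (inv sigma i).\<close>
definition perm_act :: "(nat \<Rightarrow> nat) \<Rightarrow> nat list \<Rightarrow> nat list" where
  "perm_act \<sigma> x = permute_list (inv \<sigma>) x"

definition perm_chan :: "nat \<Rightarrow> nat list \<Rightarrow> nat list \<Rightarrow> real" where
  "perm_chan n y x =
     real (card {\<sigma>. \<sigma> permutes {..<n} \<and> y = perm_act \<sigma> x}) / real (fact n)"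

text \<open>A deterministic IDF code: encoders f i j ys xs (message i in {1..M}, block j in {0..<l},
  ys / xs the previous j output / input blocks) and decoding sets D i.\<close>
definition is_det_idf_code ::
  "nat \<Rightarrow> nat \<Rightarrow> nat \<Rightarrow> nat \<Rightarrow> (nat \<Rightarrow> nat \<Rightarrow> nat list list \<Rightarrow> nat list list \<Rightarrow> nat list)
     \<Rightarrow> (nat \<Rightarrow> nat list list set) \<Rightarrow> bool" where
  "is_det_idf_code q n l M f D \<longleftrightarrow>
     (\<forall>i\<in>{1..M}. \<forall>j<l. \<forall>ys xs. length ys = j \<and> length xs = j \<and>
         set ys \<subseteq> blocks q n \<and> set xs \<subseteq> blocks q n \<longrightarrow> f i j ys xs \<in> blocks q n)
   \<and> (\<forall>i\<in>{1..M}. D i \<subseteq> block_seqs q n l)"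

definition idf_joint ::
  "nat \<Rightarrow> (nat \<Rightarrow> nat \<Rightarrow> nat list list \<Rightarrow> nat list list \<Rightarrow> nat list) \<Rightarrow> nat
     \<Rightarrow> nat list list \<Rightarrow> nat list list \<Rightarrow> real" where
  "idf_joint n f i xs ys =
     (\<Prod>j<length xs. (if xs ! j = f i j (take j ys) (take j xs) then 1 else 0)
                     * perm_chan n (ys ! j) (xs ! j))"

definition idf_prob ::
  "nat \<Rightarrow> nat \<Rightarrow> nat \<Rightarrow> (nat \<Rightarrow> nat \<Rightarrow> nat list list \<Rightarrow> nat list list \<Rightarrow> nat list) \<Rightarrow> nat
     \<Rightarrow> nat list list set \<Rightarrow> real" where
  "idf_prob q n l f i A =
     (\<Sum>xs\<in>block_seqs q n l. \<Sum>ys\<in>block_seqs q n l \<inter> A. idf_joint n f i xs ys)"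

definition idf_type1 ::
  "nat \<Rightarrow> nat \<Rightarrow> nat \<Rightarrow> nat \<Rightarrow> (nat \<Rightarrow> nat \<Rightarrow> nat list list \<Rightarrow> nat list list \<Rightarrow> nat list)
     \<Rightarrow> (nat \<Rightarrow> nat list list set) \<Rightarrow> real" where
  "idf_type1 q n l M f D = Max {idf_prob q n l f i (- D i) | i. i \<in> {1..M}}"

definition idf_type2 ::
  "nat \<Rightarrow> nat \<Rightarrow> nat \<Rightarrow> nat \<Rightarrow> (nat \<Rightarrow> nat \<Rightarrow> nat list list \<Rightarrow> nat list list \<Rightarrow> nat list)
     \<Rightarrow> (nat \<Rightarrow> nat list list set) \<Rightarrow> real" where
  "idf_type2 q n l M f D =
     Max {idf_prob q n l f i (D k) | i k. i \<in> {1..M} \<and> k \<in> {1..M} \<and> i \<noteq> k}"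

end

theory Submission
  imports Defs
begin


definition orb :: "nat \<Rightarrow> nat list \<Rightarrow> nat list set" where
  "orb n x = (\<lambda>\<sigma>. perm_act \<sigma> x) ` {\<sigma>. \<sigma> permutes {..<n}}"

lemma perm_act_length[simp]: "length (perm_act \<sigma> x) = length x"
  by (simp add: perm_act_def)

lemma perm_act_mset: "\<sigma> permutes {..<length x} \<Longrightarrow> mset (perm_act \<sigma> x) = mset x"
  by (simp add: perm_act_def permutes_inv)

lemma perm_act_comp:
  assumes "\<sigma> permutes {..<length x}" "\<tau> permutes {..<length x}"
  shows "perm_act (\<tau> \<circ> \<sigma>) x = perm_act \<tau> (perm_act \<sigma> x)"
proof -
  have "inv (\<tau> \<circ> \<sigma>) = inv \<sigma> \<circ> inv \<tau>"
    using assms by (simp add: o_inv_distrib permutes_bij)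
  then show ?thesis unfolding perm_act_def
    using permute_list_compose[of "inv \<tau>" x "inv \<sigma>"] assms by (simp add: permutes_inv)
qed

lemma perm_act_id[simp]: "perm_act id x = x"
  by (simp add: perm_act_def)

lemma finite_orb[simp]: "finite (orb n x)"
  unfolding orb_def by (simp add: finite_permutations)

lemma orb_self: "x \<in> orb n x"
  unfolding orb_def using permutes_id[of "{..<n}"] by (metis (mono_tags) image_eqI mem_Collect_eq perm_act_id)

lemma orb_mset: "length x = n \<Longrightarrow> y \<in> orb n x \<Longrightarrow> mset y = mset x \<and> length y = n"
  unfolding orb_def using perm_act_mset by auto

lemma set_mset_eq: "mset y = mset x \<Longrightarrow> set y = set x"
  by (metis set_mset_mset)

lemma orb_blocks: "x \<in> blocks q n \<Longrightarrow> orb n x \<subseteq> blocks q n"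
proof
  fix y assume x: "x \<in> blocks q n" and y: "y \<in> orb n x"
  have lx: "length x = n" using x by (simp add: blocks_def)
  have "mset y = mset x" "length y = n" using orb_mset[OF lx y] by auto
  then show "y \<in> blocks q n" using x set_mset_eq[of y x] by (simp add: blocks_def)
qed

lemma orb_char: "x \<in> blocks q n \<Longrightarrow> orb n x = {y \<in> blocks q n. mset y = mset x}"
proof
  assume x: "x \<in> blocks q n"
  then have lx: "length x = n" by (simp add: blocks_def)
  show "orb n x \<subseteq> {y \<in> blocks q n. mset y = mset x}"
    using orb_blocks[OF x] orb_mset[OF lx] by auto
  show "{y \<in> blocks q n. mset y = mset x} \<subseteq> orb n x"
  proof
    fix y assume "y \<in> {y \<in> blocks q n. mset y = mset x}"
    then have m: "mset y = mset x" by auto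
    obtain p where p: "p permutes {..<length x}" "permute_list p x = y"
      using mset_eq_permutation[OF m] by blast
    have "perm_act (inv p) x = y" unfolding perm_act_def
      using p by (simp add: permutes_inv_inv)
    moreover have "inv p permutes {..<n}" using p lx by (simp add: permutes_inv)
    ultimately show "y \<in> orb n x" unfolding orb_def by blast
  qed
qed

definition fib :: "nat \<Rightarrow> nat list \<Rightarrow> nat list \<Rightarrow> (nat \<Rightarrow> nat) set" where
  "fib n y x = {\<sigma>. \<sigma> permutes {..<n} \<and> y = perm_act \<sigma> x}"

lemma perm_chan_fib: "perm_chan n y x = real (card (fib n y x)) / real (fact n)"
  by (simp add: perm_chan_def fib_def)

lemma finite_fib[simp]: "finite (fib n y x)"
  unfolding fib_def by (rule finite_subset[OF _ finite_permutations[of "{..<n}"]]) auto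

lemma perm_chan_nz: "perm_chan n y x \<noteq> 0 \<Longrightarrow> y \<in> orb n x"
  unfolding perm_chan_fib orb_def fib_def by (auto simp: card_eq_0_iff)

lemma fib_card_le:
  assumes lx: "length x = n" and t: "\<tau> permutes {..<n}" and y: "y = perm_act \<tau> x"
  shows "card (fib n x x) \<le> card (fib n y x)"
proof (rule card_inj_on_le)
  show "inj_on ((\<circ>) \<tau>) (fib n x x)"
  proof (rule inj_onI)
    fix a b assume "\<tau> \<circ> a = \<tau> \<circ> b"
    then have "\<forall>z. \<tau> (a z) = \<tau> (b z)" by (metis comp_apply)
    then show "a = b" using permutes_inj[OF t] by (auto simp: inj_eq fun_eq_iff)
  qed
  show "(\<circ>) \<tau> ` fib n x x \<subseteq> fib n y x"
  proof
    fix s assume "s \<in> (\<circ>) \<tau> ` fib n x x"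
    then obtain \<rho> where r: "\<rho> permutes {..<n}" "x = perm_act \<rho> x" "s = \<tau> \<circ> \<rho>"
      unfolding fib_def by auto
    have "perm_act s x = perm_act \<tau> (perm_act \<rho> x)" using r t lx perm_act_comp by auto
    then show "s \<in> fib n y x" unfolding fib_def using r t y permutes_compose[OF r(1) t] by auto
  qed
qed simp

lemma fib_card_ge:
  assumes lx: "length x = n" and t: "\<tau> permutes {..<n}" and y: "y = perm_act \<tau> x"
  shows "card (fib n y x) \<le> card (fib n x x)"
proof (rule card_inj_on_le)
  have ti: "inv \<tau> permutes {..<n}" using t by (simp add: permutes_inv)
  show "inj_on ((\<circ>) (inv \<tau>)) (fib n y x)"
  proof (rule inj_onI)
    fix a b assume "(inv \<tau>) \<circ> a = (inv \<tau>) \<circ> b"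
    then have "\<forall>z. (inv \<tau>) (a z) = (inv \<tau>) (b z)" by (metis comp_apply)
    then show "a = b" using permutes_inj[OF ti] by (auto simp: inj_eq fun_eq_iff)
  qed
  show "(\<circ>) (inv \<tau>) ` fib n y x \<subseteq> fib n x x"
  proof
    fix s assume "s \<in> (\<circ>) (inv \<tau>) ` fib n y x"
    then obtain \<rho> where r: "\<rho> permutes {..<n}" "y = perm_act \<rho> x" "s = inv \<tau> \<circ> \<rho>"
      unfolding fib_def by auto
    have "perm_act s x = perm_act (inv \<tau>) (perm_act \<rho> x)" using r ti lx perm_act_comp by auto
    also have "\<dots> = perm_act (inv \<tau>) (perm_act \<tau> x)" using r y by simp
    also have "\<dots> = perm_act (inv \<tau> \<circ> \<tau>) x" using t ti lx perm_act_comp by auto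
    also have "inv \<tau> \<circ> \<tau> = id" using t by (simp add: permutes_inv_o(2))
    finally have "perm_act s x = x" by (metis perm_act_id id_def)
    then show "s \<in> fib n x x" unfolding fib_def using r ti permutes_compose[OF r(1) ti] by auto
  qed
qed simp

lemma perm_chan_orb:
  assumes "length x = n" "y \<in> orb n x"
  shows "perm_chan n y x = perm_chan n x x"
proof -
  obtain \<tau> where "\<tau> permutes {..<n}" "y = perm_act \<tau> x" using assms(2) unfolding orb_def by auto
  then show ?thesis unfolding perm_chan_fib using fib_card_le fib_card_ge assms(1)
    by (metis le_antisym)
qed

lemma sum_perm_chan:
  assumes x: "x \<in> blocks q n"
  shows "(\<Sum>y\<in>blocks q n. perm_chan n y x) = 1"
proof -
  have fb: "finite (blocks q n)" unfolding blocks_def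
    using finite_lists_length_eq[of "{1..q}" n] by (simp add: conj_commute)
  have "(\<Sum>y\<in>blocks q n. real (card (fib n y x))) = real (\<Sum>y\<in>blocks q n. card (fib n y x))"
    by simp
  also have "(\<Sum>y\<in>blocks q n. card (fib n y x)) = card (\<Union>y\<in>blocks q n. fib n y x)"
  proof (rule card_UN_disjoint[symmetric])
    show "\<forall>i\<in>blocks q n. finite (fib n i x)" by simp
  qed (auto simp: fb fib_def)
  also have "(\<Union>y\<in>blocks q n. fib n y x) = {\<sigma>. \<sigma> permutes {..<n}}"
  proof -
    have "perm_act \<sigma> x \<in> blocks q n" if "\<sigma> permutes {..<n}" for \<sigma>
      using orb_blocks[OF x] that unfolding orb_def by auto
    then show ?thesis unfolding fib_def by auto
  qed
  also have "card \<dots> = fact n" by (simp add: card_permutations)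
  finally show ?thesis unfolding perm_chan_fib
    by (simp add: sum_divide_distrib[symmetric])
qed

lemma perm_chan_uniform:
  assumes x: "x \<in> blocks q n" and y: "y \<in> orb n x"
  shows "perm_chan n y x = 1 / real (card (orb n x))"
proof -
  have lx: "length x = n" using x by (simp add: blocks_def)
  have fb: "finite (blocks q n)" unfolding blocks_def
    using finite_lists_length_eq[of "{1..q}" n] by (simp add: conj_commute)
  have "1 = (\<Sum>z\<in>blocks q n. perm_chan n z x)" using sum_perm_chan[OF x] by simp
  also have "\<dots> = (\<Sum>z\<in>orb n x. perm_chan n z x)"
    by (rule sum.mono_neutral_right[OF fb orb_blocks[OF x]]) (use perm_chan_nz in blast)
  also have "\<dots> = (\<Sum>z\<in>orb n x. perm_chan n x x)"
    using perm_chan_orb[OF lx] by simp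
  also have "\<dots> = real (card (orb n x)) * perm_chan n x x" by simp
  finally have e: "real (card (orb n x)) * perm_chan n x x = 1" by simp
  then have "real (card (orb n x)) \<noteq> 0" by auto
  with e have "perm_chan n x x = 1 / real (card (orb n x))" by (simp add: field_simps)
  then show ?thesis using perm_chan_orb[OF lx y] by simp
qed



lemma finite_blocks[simp]: "finite (blocks q n)"
  unfolding blocks_def using finite_lists_length_eq[of "{1..q}" n] by (simp add: conj_commute)

lemma card_blocks: "card (blocks q n) = q ^ n"
proof -
  have "blocks q n = {xs. set xs \<subseteq> {1..q} \<and> length xs = n}" unfolding blocks_def by auto
  then show ?thesis using card_lists_length_eq[of "{1..q}" n] by simp
qed

definition cnt :: "nat \<Rightarrow> nat list \<Rightarrow> nat \<Rightarrow> nat" where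
  "cnt q x = restrict (\<lambda>a. count (mset x) a) {1..q}"

lemma cnt_eq_iff: "x \<in> blocks q n \<Longrightarrow> y \<in> blocks q n \<Longrightarrow> cnt q x = cnt q y \<longleftrightarrow> mset x = mset y"
proof
  assume x: "x \<in> blocks q n" and y: "y \<in> blocks q n" and c: "cnt q x = cnt q y"
  show "mset x = mset y"
  proof (rule multiset_eqI)
    fix a show "count (mset x) a = count (mset y) a"
    proof (cases "a \<in> {1..q}")
      case True then show ?thesis using fun_cong[OF c, of a] by (simp add: cnt_def)
    next
      case False
      then have "a \<notin> set x" "a \<notin> set y" using x y by (auto simp: blocks_def)
      then show ?thesis by (metis count_mset_0_iff)
    qed
  qed
qed (simp add: cnt_def)

lemma cnt_PiE: "x \<in> blocks q n \<Longrightarrow> cnt q x \<in> {1..q} \<rightarrow>\<^sub>E {0..n}"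
proof -
  assume x: "x \<in> blocks q n"
  have "count (mset x) a \<le> n" for a
    using x count_le_size[of "mset x" a] by (simp add: blocks_def)
  then show ?thesis by (auto simp: cnt_def)
qed

lemma card_orbits: "card (orb n ` blocks q n) \<le> (n+1)^q"
proof -
  have "orb n ` blocks q n \<subseteq> (\<lambda>c. {y \<in> blocks q n. cnt q y = c}) ` ({1..q} \<rightarrow>\<^sub>E {0..n})"
  proof
    fix ob assume "ob \<in> orb n ` blocks q n"
    then obtain x where x: "x \<in> blocks q n" "ob = orb n x" by auto
    have "ob = {y \<in> blocks q n. cnt q y = cnt q x}"
      using x orb_char[OF x(1)] cnt_eq_iff[OF _ x(1)] by auto
    then show "ob \<in> (\<lambda>c. {y \<in> blocks q n. cnt q y = c}) ` ({1..q} \<rightarrow>\<^sub>E {0..n})"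
      using cnt_PiE[OF x(1)] by blast
  qed
  then have "card (orb n ` blocks q n) \<le> card ((\<lambda>c. {y \<in> blocks q n. cnt q y = c}) ` ({1..q} \<rightarrow>\<^sub>E {0..n}))"
    by (intro card_mono) (auto simp: finite_PiE)
  also have "\<dots> \<le> card ({1..q} \<rightarrow>\<^sub>E {0..n::nat})" by (rule card_image_le) (simp add: finite_PiE)
  also have "\<dots> = (n+1)^q" by (simp add: card_PiE)
  finally show ?thesis .
qed

lemma big_orbit:
  assumes "q \<ge> 1"
  shows "\<exists>x\<in>blocks q n. q^n \<le> card (orb n x) * (n+1)^q"
proof (rule ccontr)
  assume "\<not> ?thesis"
  then have b: "\<forall>x\<in>blocks q n. card (orb n x) * (n+1)^q \<le> q^n - 1" by force
  define X where "X = orb n ` blocks q n"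
  have "blocks q n \<subseteq> \<Union>X" unfolding X_def using orb_self by blast
  then have "card (blocks q n) \<le> card (\<Union>X)"
    by (intro card_mono) (auto simp: X_def)
  also have "\<dots> \<le> sum card X" by (rule card_Union_le_sum_card)
  finally have "q^n * (n+1)^q \<le> sum card X * (n+1)^q" by (simp add: card_blocks)
  also have "\<dots> = (\<Sum>ob\<in>X. card ob * (n+1)^q)" by (simp add: sum_distrib_right)
  also have "\<dots> \<le> (\<Sum>ob\<in>X. q^n - 1)" using b unfolding X_def by (intro sum_mono) auto
  also have "\<dots> = card X * (q^n - 1)" by simp
  also have "\<dots> \<le> (n+1)^q * (q^n - 1)" unfolding X_def using card_orbits by simp
  finally have "q^n * (n+1)^q \<le> (n+1)^q * (q^n - 1)" .
  moreover have "q^n \<ge> 1" using assms by simp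
  moreover have "(n+1)^q > 0" by simp
  ultimately show False
    by (metis diff_less less_numeral_extra(1) mult.commute nat_mult_le_cancel_disj not_le order_less_le_trans)
qed

lemma greedy:
  assumes "finite X" "\<forall>x\<in>X. card {y\<in>X. C x y} \<le> V" "\<forall>x y. C x y = C y x" "\<forall>x. C x x"
  shows "\<exists>S\<subseteq>X. (\<forall>a\<in>S. \<forall>b\<in>S. a \<noteq> b \<longrightarrow> \<not> C a b) \<and> card X \<le> card S * V"
  using assms
proof (induction "card X" arbitrary: X rule: less_induct)
  case less
  show ?case
  proof (cases "X = {}")
    case True then show ?thesis by auto
  next
    case False
    then obtain x where x: "x \<in> X" by auto
    define X' where "X' = X - {y\<in>X. C x y}"
    have sub: "X' \<subseteq> X" unfolding X'_def by auto
    have "x \<notin> X'" unfolding X'_def using less.prems(4) by auto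
    then have lt: "card X' < card X" using x sub less.prems(1) by (metis psubsetI psubset_card_mono)
    have fX': "finite X'" using finite_subset[OF sub less.prems(1)] .
    have bd: "\<forall>z\<in>X'. card {y\<in>X'. C z y} \<le> V"
    proof
      fix z assume z: "z \<in> X'"
      have "card {y\<in>X'. C z y} \<le> card {y\<in>X. C z y}"
        using sub less.prems(1) by (intro card_mono) auto
      then show "card {y\<in>X'. C z y} \<le> V" using less.prems(2) z sub by force
    qed
    have "\<exists>S\<subseteq>X'. (\<forall>a\<in>S. \<forall>b\<in>S. a \<noteq> b \<longrightarrow> \<not> C a b) \<and> card X' \<le> card S * V"
      by (rule less.hyps[OF lt fX' bd less.prems(3) less.prems(4)])
    then obtain S' where S': "S' \<subseteq> X'" "\<forall>a\<in>S'. \<forall>b\<in>S'. a \<noteq> b \<longrightarrow> \<not> C a b"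
      "card X' \<le> card S' * V" by blast
    define S where "S = insert x S'"
    have xS': "x \<notin> S'" using S'(1) \<open>x \<notin> X'\<close> by blast
    have fS': "finite S'" using finite_subset[OF S'(1) fX'] .
    have "S \<subseteq> X" unfolding S_def using S'(1) sub x by auto
    moreover have "\<forall>a\<in>S. \<forall>b\<in>S. a \<noteq> b \<longrightarrow> \<not> C a b"
    proof (intro ballI impI)
      fix a b assume "a \<in> S" "b \<in> S" "a \<noteq> b"
      then show "\<not> C a b" unfolding S_def using S'(1,2) less.prems(3) unfolding X'_def by auto
    qed
    moreover have "card X \<le> card S * V"
    proof -
      have "X = X' \<union> {y\<in>X. C x y}" unfolding X'_def by auto
      then have "card X \<le> card X' + card {y\<in>X. C x y}" by (metis card_Un_le)
      also have "\<dots> \<le> card S' * V + V" using S'(3) less.prems(2) x by force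
      also have "\<dots> = card S * V" unfolding S_def using xS' fS' by simp
      finally show ?thesis .
    qed
    ultimately show ?thesis by blast
  qed
qed

lemma ball_bound:
  fixes U :: "'a set" and f :: "'a \<Rightarrow> nat"
  assumes U: "finite U" "card U = N" and t: "t \<le> N"
  shows "card {g \<in> U \<rightarrow>\<^sub>E {..<K}. t \<le> card {u\<in>U. g u = f u}} \<le> 2^N * K^(N-t)"
proof -
  define I where "I = {T. T \<subseteq> U \<and> card T = t}"
  define A where "A T = {g \<in> U \<rightarrow>\<^sub>E {..<K}. \<forall>u\<in>T. g u = f u}" for T
  have Ad: "g \<in> A T \<longleftrightarrow> g \<in> U \<rightarrow>\<^sub>E {..<K} \<and> (\<forall>u\<in>T. g u = f u)" for g T
    unfolding A_def by simp
  have "{g \<in> U \<rightarrow>\<^sub>E {..<K}. t \<le> card {u\<in>U. g u = f u}} \<subseteq> (\<Union>T\<in>I. A T)"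
  proof
    fix g assume g: "g \<in> {g \<in> U \<rightarrow>\<^sub>E {..<K}. t \<le> card {u\<in>U. g u = f u}}"
    then obtain T where T: "T \<subseteq> {u\<in>U. g u = f u}" "card T = t"
      using obtain_subset_with_card_n[of t "{u\<in>U. g u = f u}"] by auto
    then show "g \<in> (\<Union>T\<in>I. A T)" using g unfolding I_def A_def by blast
  qed
  then have "card {g \<in> U \<rightarrow>\<^sub>E {..<K}. t \<le> card {u\<in>U. g u = f u}} \<le> card (\<Union>T\<in>I. A T)"
    by (intro card_mono finite_subset[OF _ finite_PiE[of U "\<lambda>_. {..<K}"]]) (auto simp: A_def U)
  also have "\<dots> \<le> (\<Sum>T\<in>I. card (A T))"
    by (rule card_UN_le) (auto simp: I_def U)
  also have "\<dots> \<le> (\<Sum>T\<in>I. K^(N-t))"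
  proof (rule sum_mono)
    fix T assume T: "T \<in> I"
    have "card (A T) \<le> card ((U - T) \<rightarrow>\<^sub>E {..<K})"
    proof (rule card_inj_on_le)
      show "inj_on (\<lambda>g. restrict g (U - T)) (A T)"
      proof (rule inj_onI)
        fix g h assume g: "g \<in> A T" and h: "h \<in> A T" and e: "restrict g (U - T) = restrict h (U - T)"
        show "g = h"
        proof
          fix u
          show "g u = h u"
          proof (cases "u \<in> U")
            case True
            show ?thesis
            proof (cases "u \<in> T")
              case True
              have "g u = f u" using g True Ad by blast
              moreover have "h u = f u" using h True Ad by blast
              ultimately show ?thesis by simp
            next
              case False
              then have "u \<in> U - T" using \<open>u \<in> U\<close> by blast
              then show ?thesis using fun_cong[OF e, of u] by simp
            qed
          next
            case False
            have "g \<in> U \<rightarrow>\<^sub>E {..<K}" "h \<in> U \<rightarrow>\<^sub>E {..<K}" using g h Ad by blast+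
            then have "g u = undefined" "h u = undefined" using False by (meson PiE_arb)+
            then show ?thesis by (rule trans[OF _ sym])
          qed
        qed
      qed
      show "(\<lambda>g. restrict g (U - T)) ` A T \<subseteq> (U - T) \<rightarrow>\<^sub>E {..<K}"
        unfolding A_def by auto
    qed (simp add: finite_PiE U)
    also have "\<dots> = K ^ card (U - T)" by (simp add: card_PiE U)
    also have "card (U - T) = N - t"
    proof -
      have TU: "T \<subseteq> U" "card T = t" using T unfolding I_def by auto
      have "card (U - T) = card U - card T"
        by (rule card_Diff_subset[OF finite_subset[OF TU(1) U(1)] TU(1)])
      then show ?thesis using TU U by simp
    qed
    finally show "card (A T) \<le> K^(N-t)" .
  qed
  also have "\<dots> = card I * K^(N-t)" by simp
  also have "card I \<le> 2^N"
  proof -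
    have "card I \<le> card (Pow U)" unfolding I_def by (intro card_mono) (auto simp: U)
    then show ?thesis by (simp add: card_Pow U)
  qed
  then have "card I * K^(N-t) \<le> 2^N * K^(N-t)" by simp
  finally show ?thesis .
qed

lemma gv:
  fixes U :: "'a set"
  assumes U: "finite U" "card U = N" and t: "t \<le> N"
  shows "\<exists>S \<subseteq> U \<rightarrow>\<^sub>E {..<K}. (\<forall>g\<in>S. \<forall>h\<in>S. g \<noteq> h \<longrightarrow> card {u\<in>U. g u = h u} < t)
           \<and> K^N \<le> card S * (2^N * K^(N-t))"
proof -
  define C where "C g h = (t \<le> card {u\<in>U. h u = g u})" for g h :: "'a \<Rightarrow> nat"
  have b: "\<forall>x\<in>U \<rightarrow>\<^sub>E {..<K}. card {y\<in>U \<rightarrow>\<^sub>E {..<K}. C x y} \<le> 2^N * K^(N-t)"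
    unfolding C_def using ball_bound[OF U t, of K] by blast
  have sy: "\<forall>x y. C x y = C y x"
  proof (intro allI)
    fix x y :: "'a \<Rightarrow> nat"
    have "{u\<in>U. y u = x u} = {u\<in>U. x u = y u}" by (auto simp: eq_commute)
    then show "C x y = C y x" unfolding C_def by simp
  qed
  have rf: "\<forall>x. C x x" unfolding C_def using U t by simp
  obtain S where S: "S \<subseteq> U \<rightarrow>\<^sub>E {..<K}" "\<forall>a\<in>S. \<forall>b\<in>S. a \<noteq> b \<longrightarrow> \<not> C a b"
    "card (U \<rightarrow>\<^sub>E {..<K}) \<le> card S * (2^N * K^(N-t))"
    using greedy[OF finite_PiE[OF U(1)] b sy rf] by blast
  have "card (U \<rightarrow>\<^sub>E {..<K}) = (\<Prod>i\<in>U. card {..<K})" by (rule card_PiE[OF U(1)])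
  also have "\<dots> = K^N" using U(2) by simp
  finally have ce: "card (U \<rightarrow>\<^sub>E {..<K}) = K^N" .
  have Q: "K^N \<le> card S * (2^N * K^(N-t))" using S(3) unfolding ce .
  have P: "\<forall>g\<in>S. \<forall>h\<in>S. g \<noteq> h \<longrightarrow> card {u\<in>U. g u = h u} < t"
  proof (intro ballI impI)
    fix g h assume gh: "g \<in> S" "h \<in> S" "g \<noteq> h"
    have "\<not> C h g" using S(2) gh(1) gh(2) gh(3)[symmetric] by simp
    then show "card {u\<in>U. g u = h u} < t" unfolding C_def by simp
  qed
  show ?thesis by (rule exI[of _ S]) (use S(1) P Q in simp)
qed



definition wblk :: "nat \<Rightarrow> nat \<Rightarrow> nat list" where
  "wblk n a = replicate a 1 @ replicate (n - a) 2"

lemma wblk_blocks: "a \<le> n \<Longrightarrow> 2 \<le> q \<Longrightarrow> wblk n a \<in> blocks q n"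
  unfolding wblk_def blocks_def by auto

lemma wblk_len[simp]: "a \<le> n \<Longrightarrow> length (wblk n a) = n"
  unfolding wblk_def by auto

lemma wblk_inj: "a \<le> n \<Longrightarrow> b \<le> n \<Longrightarrow> mset (wblk n a) = mset (wblk n b) \<Longrightarrow> a = b"
proof -
  assume "mset (wblk n a) = mset (wblk n b)"
  then have "count (mset (wblk n a)) 1 = count (mset (wblk n b)) 1" by simp
  then show "a = b" unfolding wblk_def by (simp add: count_mset filter_replicate)
qed

lemma finite_block_seqs[simp]: "finite (block_seqs q n l)"
proof -
  have "block_seqs q n l = {xs. set xs \<subseteq> blocks q n \<and> length xs = l}"
    unfolding block_seqs_def by auto
  then show ?thesis using finite_lists_length_eq[of "blocks q n" l] by simp
qed

definition enc :: "nat \<Rightarrow> nat \<Rightarrow> nat list \<Rightarrow> (nat \<Rightarrow> nat list list \<Rightarrow> nat)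
     \<Rightarrow> nat \<Rightarrow> nat \<Rightarrow> nat list list \<Rightarrow> nat list list \<Rightarrow> nat list" where
  "enc n r x0 G i j ys xs = (if j < r then x0 else wblk n (G i (take r ys)))"

definition dec :: "nat \<Rightarrow> nat \<Rightarrow> nat \<Rightarrow> (nat \<Rightarrow> nat list list \<Rightarrow> nat) \<Rightarrow> nat \<Rightarrow> nat list list set" where
  "dec q n r G i = {ys \<in> block_seqs q n (Suc r). mset (ys ! r) = mset (wblk n (G i (take r ys)))}"

definition Eseq :: "nat \<Rightarrow> nat \<Rightarrow> nat list \<Rightarrow> (nat \<Rightarrow> nat list list \<Rightarrow> nat) \<Rightarrow> nat \<Rightarrow> nat list list \<Rightarrow> nat list list" where
  "Eseq n r x0 G i ys = replicate r x0 @ [wblk n (G i (take r ys))]"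

definition Pm :: "nat \<Rightarrow> nat \<Rightarrow> nat list \<Rightarrow> (nat \<Rightarrow> nat list list \<Rightarrow> nat) \<Rightarrow> nat \<Rightarrow> nat list list \<Rightarrow> real" where
  "Pm n r x0 G i ys = (\<Prod>j<Suc r. perm_chan n (ys ! j) (Eseq n r x0 G i ys ! j))"

lemma Eseq_nth: "j < Suc r \<Longrightarrow> Eseq n r x0 G i ys ! j = (if j < r then x0 else wblk n (G i (take r ys)))"
  unfolding Eseq_def by (auto simp: nth_append)

lemma Eseq_len[simp]: "length (Eseq n r x0 G i ys) = Suc r"
  unfolding Eseq_def by simp

lemma enc_Eseq: "j < Suc r \<Longrightarrow> enc n r x0 G i j (take j ys) xs' = Eseq n r x0 G i ys ! j"
  unfolding enc_def using Eseq_nth[of j r n x0 G i ys] by (auto simp: min_def)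

lemma perm_chan_nonneg: "perm_chan n y x \<ge> 0"
  unfolding perm_chan_def by simp

lemma joint_eq:
  assumes xs: "length xs = Suc r"
  shows "idf_joint n (enc n r x0 G) i xs ys = (if xs = Eseq n r x0 G i ys then Pm n r x0 G i ys else 0)"
proof -
  have "idf_joint n (enc n r x0 G) i xs ys =
     (\<Prod>j<Suc r. (if xs ! j = Eseq n r x0 G i ys ! j then 1 else 0) * perm_chan n (ys ! j) (xs ! j))"
    unfolding idf_joint_def xs using enc_Eseq by (intro prod.cong) auto
  also have "\<dots> = (if xs = Eseq n r x0 G i ys then Pm n r x0 G i ys else 0)"
  proof (cases "xs = Eseq n r x0 G i ys")
    case True then show ?thesis unfolding Pm_def by simp
  next
    case False
    then obtain j where j: "j < Suc r" "xs ! j \<noteq> Eseq n r x0 G i ys ! j"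
      using xs by (metis Eseq_len nth_equalityI)
    have "(\<Prod>j<Suc r. (if xs ! j = Eseq n r x0 G i ys ! j then 1 else 0) * perm_chan n (ys ! j) (xs ! j)) = 0"
      by (rule prod_zero) (use j in auto)
    then show ?thesis using False by simp
  qed
  finally show ?thesis .
qed

lemma Eseq_bs:
  assumes "x0 \<in> blocks q n" "\<forall>i u. G i u \<le> n" "2 \<le> q"
  shows "Eseq n r x0 G i ys \<in> block_seqs q n (Suc r)"
  using assms wblk_blocks unfolding Eseq_def block_seqs_def by auto

lemma prob_eq:
  assumes "x0 \<in> blocks q n" "\<forall>i u. G i u \<le> n" "2 \<le> q"
  shows "idf_prob q n (Suc r) (enc n r x0 G) i A = (\<Sum>ys\<in>block_seqs q n (Suc r) \<inter> A. Pm n r x0 G i ys)"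
proof -
  have "idf_prob q n (Suc r) (enc n r x0 G) i A =
    (\<Sum>ys\<in>block_seqs q n (Suc r) \<inter> A. \<Sum>xs\<in>block_seqs q n (Suc r). idf_joint n (enc n r x0 G) i xs ys)"
    unfolding idf_prob_def by (rule sum.swap)
  also have "\<dots> = (\<Sum>ys\<in>block_seqs q n (Suc r) \<inter> A. \<Sum>xs\<in>block_seqs q n (Suc r).
        (if xs = Eseq n r x0 G i ys then Pm n r x0 G i ys else 0))"
    by (intro sum.cong refl joint_eq) (simp add: block_seqs_def)
  also have "\<dots> = (\<Sum>ys\<in>block_seqs q n (Suc r) \<inter> A. Pm n r x0 G i ys)"
    using Eseq_bs[OF assms] by (intro sum.cong refl) (simp add: sum.delta')
  finally show ?thesis .
qed

lemma Pm_nonneg: "Pm n r x0 G i ys \<ge> 0"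
  unfolding Pm_def by (intro prod_nonneg) (simp add: perm_chan_nonneg)

lemma Pm_last:
  assumes "Pm n r x0 G i ys \<noteq> 0" "\<forall>i u. G i u \<le> n"
  shows "mset (ys ! r) = mset (wblk n (G i (take r ys)))"
proof -
  have "perm_chan n (ys ! r) (Eseq n r x0 G i ys ! r) \<noteq> 0"
    using assms(1) unfolding Pm_def by (metis lessI lessThan_iff prod_zero_iff finite_lessThan)
  then have yo: "ys ! r \<in> orb n (wblk n (G i (take r ys)))"
  proof -
    have "Eseq n r x0 G i ys ! r = wblk n (G i (take r ys))" using Eseq_nth[of r r n x0 G i ys] by simp
    then show ?thesis using perm_chan_nz[of n "ys ! r" "Eseq n r x0 G i ys ! r"] \<open>perm_chan n (ys ! r) (Eseq n r x0 G i ys ! r) \<noteq> 0\<close> by simp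
  qed
  have le: "G i (take r ys) \<le> n" using assms(2) by blast
  show ?thesis by (rule conjunct1[OF orb_mset[OF wblk_len[OF le] yo]])
qed

lemma type1_zero:
  assumes "x0 \<in> blocks q n" "\<forall>i u. G i u \<le> n" "2 \<le> q"
  shows "idf_prob q n (Suc r) (enc n r x0 G) i (- dec q n r G i) = 0"
  unfolding prob_eq[OF assms]
proof (rule sum.neutral, rule ballI)
  fix ys assume ys: "ys \<in> block_seqs q n (Suc r) \<inter> - dec q n r G i"
  show "Pm n r x0 G i ys = 0"
  proof (rule ccontr)
    assume "Pm n r x0 G i ys \<noteq> 0"
    then have "mset (ys ! r) = mset (wblk n (G i (take r ys)))" using Pm_last assms(2) by blast
    then show False using ys unfolding dec_def by auto
  qed
qed



lemma bs_snoc: "block_seqs q n (Suc r) = (\<lambda>p. fst p @ [snd p]) ` (block_seqs q n r \<times> blocks q n)"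
proof
  show "block_seqs q n (Suc r) \<subseteq> (\<lambda>p. fst p @ [snd p]) ` (block_seqs q n r \<times> blocks q n)"
  proof
    fix ys assume ys: "ys \<in> block_seqs q n (Suc r)"
    then have "ys \<noteq> []" by (auto simp: block_seqs_def)
    then have e: "ys = butlast ys @ [last ys]" by simp
    have "butlast ys \<in> block_seqs q n r" "last ys \<in> blocks q n"
      using ys \<open>ys \<noteq> []\<close> by (auto simp: block_seqs_def dest: in_set_butlastD)
    then show "ys \<in> (\<lambda>p. fst p @ [snd p]) ` (block_seqs q n r \<times> blocks q n)"
      using e by (metis (no_types, lifting) SigmaI fst_conv image_eqI snd_conv)
  qed
  show "(\<lambda>p. fst p @ [snd p]) ` (block_seqs q n r \<times> blocks q n) \<subseteq> block_seqs q n (Suc r)"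
    by (auto simp: block_seqs_def)
qed

lemma inj_snoc: "inj_on (\<lambda>p. fst p @ [snd p]) A"
  by (rule inj_onI) (auto simp: prod_eq_iff)

lemma Pm_snoc:
  assumes "length u = r"
  shows "Pm n r x0 G i (u @ [y]) = (\<Prod>j<r. perm_chan n (u ! j) x0) * perm_chan n y (wblk n (G i u))"
proof -
  have "Pm n r x0 G i (u @ [y]) = (\<Prod>j<r. perm_chan n ((u @ [y]) ! j) (Eseq n r x0 G i (u @ [y]) ! j))
         * perm_chan n ((u @ [y]) ! r) (Eseq n r x0 G i (u @ [y]) ! r)"
    unfolding Pm_def by (rule prod.lessThan_Suc)
  also have "(\<Prod>j<r. perm_chan n ((u @ [y]) ! j) (Eseq n r x0 G i (u @ [y]) ! j)) = (\<Prod>j<r. perm_chan n (u ! j) x0)"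
    by (rule prod.cong) (use assms in \<open>auto simp: Eseq_nth nth_append\<close>)
  also have "perm_chan n ((u @ [y]) ! r) (Eseq n r x0 G i (u @ [y]) ! r) = perm_chan n y (wblk n (G i u))"
    using assms by (simp add: Eseq_nth nth_append)
  finally show ?thesis .
qed

lemma prod_chan:
  assumes x0: "x0 \<in> blocks q n" and u: "length u = r"
  shows "(\<Prod>j<r. perm_chan n (u ! j) x0) = (if set u \<subseteq> orb n x0 then (1 / real (card (orb n x0)))^r else 0)"
proof (cases "set u \<subseteq> orb n x0")
  case True
  have "(\<Prod>j<r. perm_chan n (u ! j) x0) = (\<Prod>j<r. 1 / real (card (orb n x0)))"
  proof (rule prod.cong[OF refl])
    fix j assume "j \<in> {..<r}"
    then have "u ! j \<in> orb n x0" using True u by (metis lessThan_iff nth_mem subsetD)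
    then show "perm_chan n (u ! j) x0 = 1 / real (card (orb n x0))" by (rule perm_chan_uniform[OF x0])
  qed
  then show ?thesis using True by simp
next
  case False
  then obtain j where j: "j < r" "u ! j \<notin> orb n x0" using u by (metis in_set_conv_nth subsetI)
  have "perm_chan n (u ! j) x0 = 0" using perm_chan_nz j(2) by blast
  then have "(\<Prod>j<r. perm_chan n (u ! j) x0) = 0" by (intro prod_zero) (use j in auto)
  then show ?thesis using False by simp
qed

lemma type2_bound:
  assumes x0: "x0 \<in> blocks q n" and G: "\<forall>i u. G i u \<le> n" and q: "2 \<le> q"
  shows "idf_prob q n (Suc r) (enc n r x0 G) i (dec q n r G k)
     \<le> real (card {u. length u = r \<and> set u \<subseteq> orb n x0 \<and> G i u = G k u}) * (1 / real (card (orb n x0)))^r"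
proof -
  define BS where "BS = block_seqs q n (Suc r)"
  define c where "c = 1 / real (card (orb n x0))"
  define a where "a u = (\<Prod>j<r. perm_chan n (u ! j) x0)" for u
  have "idf_prob q n (Suc r) (enc n r x0 G) i (dec q n r G k) = (\<Sum>ys\<in>BS \<inter> dec q n r G k. Pm n r x0 G i ys)"
    unfolding BS_def by (rule prob_eq[OF x0 G q])
  also have "\<dots> = (\<Sum>ys\<in>BS. if ys \<in> dec q n r G k then Pm n r x0 G i ys else 0)"
    unfolding BS_def by (rule sum.inter_restrict) simp
  also have "\<dots> \<le> (\<Sum>ys\<in>BS. if G i (take r ys) = G k (take r ys) then Pm n r x0 G i ys else 0)"
  proof (rule sum_mono)
    fix ys assume "ys \<in> BS"
    show "(if ys \<in> dec q n r G k then Pm n r x0 G i ys else 0)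
          \<le> (if G i (take r ys) = G k (take r ys) then Pm n r x0 G i ys else 0)"
    proof (cases "ys \<in> dec q n r G k \<and> Pm n r x0 G i ys \<noteq> 0")
      case True
      then have m1: "mset (ys ! r) = mset (wblk n (G i (take r ys)))" using Pm_last G by blast
      have m2: "mset (ys ! r) = mset (wblk n (G k (take r ys)))" using True unfolding dec_def by blast
      have "G i (take r ys) = G k (take r ys)"
      proof -
        have l1: "G i (take r ys) \<le> n" and l2: "G k (take r ys) \<le> n" using G by blast+
        have "mset (wblk n (G i (take r ys))) = mset (wblk n (G k (take r ys)))" using m1 m2 by simp
        then show ?thesis by (rule wblk_inj[OF l1 l2])
      qed
      have "0 \<le> Pm n r x0 G i ys" by (rule Pm_nonneg)
      then show ?thesis using \<open>G i (take r ys) = G k (take r ys)\<close> by simp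
    next
      case False
      have "0 \<le> Pm n r x0 G i ys" by (rule Pm_nonneg)
      then show ?thesis using False by auto
    qed
  qed
  also have "\<dots> = (\<Sum>p\<in>block_seqs q n r \<times> blocks q n.
      if G i (take r (fst p @ [snd p])) = G k (take r (fst p @ [snd p])) then Pm n r x0 G i (fst p @ [snd p]) else 0)"
    unfolding BS_def bs_snoc by (subst sum.reindex[OF inj_snoc]) (simp add: o_def)
  also have "\<dots> = (\<Sum>u\<in>block_seqs q n r. \<Sum>y\<in>blocks q n.
      if G i (take r (u @ [y])) = G k (take r (u @ [y])) then Pm n r x0 G i (u @ [y]) else 0)"
    by (subst sum.cartesian_product) (simp add: split_def)
  also have "\<dots> = (\<Sum>u\<in>block_seqs q n r. if G i u = G k u then a u else 0)"
  proof (rule sum.cong[OF refl])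
    fix u assume u: "u \<in> block_seqs q n r"
    then have lu: "length u = r" by (simp add: block_seqs_def)
    have "(\<Sum>y\<in>blocks q n. if G i (take r (u @ [y])) = G k (take r (u @ [y])) then Pm n r x0 G i (u @ [y]) else 0)
       = (\<Sum>y\<in>blocks q n. if G i u = G k u then a u * perm_chan n y (wblk n (G i u)) else 0)"
      by (rule sum.cong[OF refl]) (simp add: lu Pm_snoc a_def)
    also have "\<dots> = (if G i u = G k u then a u * (\<Sum>y\<in>blocks q n. perm_chan n y (wblk n (G i u))) else 0)"
      by (simp add: sum_distrib_left)
    also have "(\<Sum>y\<in>blocks q n. perm_chan n y (wblk n (G i u))) = 1"
      by (rule sum_perm_chan[OF wblk_blocks[OF _ q]]) (use G in blast)
    finally show "(\<Sum>y\<in>blocks q n. if G i (take r (u @ [y])) = G k (take r (u @ [y])) then Pm n r x0 G i (u @ [y]) else 0)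
       = (if G i u = G k u then a u else 0)" by simp
  qed
  also have "\<dots> = (\<Sum>u\<in>block_seqs q n r. if G i u = G k u \<and> set u \<subseteq> orb n x0 then c^r else 0)"
    by (rule sum.cong[OF refl]) (simp add: a_def c_def prod_chan[OF x0] block_seqs_def)
  also have "\<dots> = (\<Sum>u\<in>block_seqs q n r \<inter> {u. G i u = G k u \<and> set u \<subseteq> orb n x0}. c^r)"
    by (subst sum.inter_restrict) simp_all
  also have "block_seqs q n r \<inter> {u. G i u = G k u \<and> set u \<subseteq> orb n x0}
      = {u. length u = r \<and> set u \<subseteq> orb n x0 \<and> G i u = G k u}"
    using orb_blocks[OF x0] by (auto simp: block_seqs_def)
  finally show ?thesis unfolding c_def by simp
qed



lemma main_m:
  fixes q l m :: nat and R :: real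
  assumes q: "q \<ge> 2" and l3: "l \<ge> 3" and Rl: "R * real l \<le> real l - 2"
    and m4: "m \<ge> 4" and big: "m * q * (l - 1) + 1 \<le> 2^m"
  shows "\<exists>M f D. is_det_idf_code q (2^m - 1) l M f D
     \<and> real M \<ge> 2 powr (real q powr (R * real l * real (2^m - 1)))
     \<and> idf_type1 q (2^m - 1) l M f D = 0
     \<and> 0 \<le> idf_type2 q (2^m - 1) l M f D \<and> idf_type2 q (2^m - 1) l M f D \<le> 3 / real m"
proof -
  define n where "n = (2::nat)^m - 1"
  define r where "r = l - 1"
  have lr: "l = Suc r" using l3 unfolding r_def by simp
  have r2: "r \<ge> 2" using l3 unfolding r_def by simp
  have n1: "n + 1 = 2^m" unfolding n_def by simp
  obtain x0 where x0: "x0 \<in> blocks q n" and x0b: "q^n \<le> card (orb n x0) * (n+1)^q"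
    using big_orbit[of q n] q by auto
  define Ob where "Ob = orb n x0"
  define co where "co = card Ob"
  have co1: "co \<ge> 1" unfolding co_def Ob_def using orb_self[of x0 n] finite_orb[of n x0]
    by (metis One_nat_def Suc_leI card_gt_0_iff empty_iff)
  define U where "U = {u. length u = r \<and> set u \<subseteq> Ob}"
  define N where "N = card U"
  have fU: "finite U" unfolding U_def Ob_def
    using finite_lists_length_eq[OF finite_orb[of n x0], of r] by (simp add: conj_commute)
  have NU: "N = co ^ r"
  proof -
    have "U = {xs. set xs \<subseteq> Ob \<and> length xs = r}" unfolding U_def by auto
    then show ?thesis unfolding N_def co_def Ob_def using card_lists_length_eq[OF finite_orb[of n x0], of r]
      by simp
  qed
  have N1: "N \<ge> 1" using co1 NU by simp
  define K where "K = (2::nat)^m"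
  define t0 where "t0 = 3 * N div m + 1"
  have mt0: "m * t0 > 3 * N"
  proof -
    have "3 * N < m * (3 * N div m) + m" using m4
      by (metis add.commute div_mult_mod_eq mod_less_divisor mult.commute nat_add_left_cancel_less
          zero_less_iff_neq_zero not_numeral_le_zero le_zero_eq)
    then show ?thesis unfolding t0_def by (simp add: algebra_simps)
  qed
  have mt1: "m * (t0 - 1) \<le> 3 * N" unfolding t0_def by simp
  have t0N: "t0 \<le> N"
  proof -
    have "m * (3 * N div m) \<le> 3 * N" by simp
    also have "3 * N < m * N" using m4 N1 by (intro mult_strict_right_mono) auto
    finally have "3 * N div m < N" by (metis mult_less_cancel1)
    then show ?thesis unfolding t0_def by simp
  qed
  obtain S where S: "S \<subseteq> U \<rightarrow>\<^sub>E {..<K}"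
    and Sd: "\<forall>g\<in>S. \<forall>h\<in>S. g \<noteq> h \<longrightarrow> card {u\<in>U. g u = h u} < t0"
    and Sc: "K^N \<le> card S * (2^N * K^(N-t0))"
    using gv[OF fU N_def[symmetric] t0N, of K] by blast
  have fS: "finite S" by (rule finite_subset[OF S finite_PiE[OF fU]]) simp
  define M where "M = card S"
  have MN: "2^N * 2^N \<le> M"
  proof -
    have e: "K^N = K^t0 * K^(N-t0)" using t0N by (simp add: power_add[symmetric])
    have e2: "card S * (2^N * K^(N-t0)) = (M * 2^N) * K^(N-t0)" unfolding M_def by (simp only: mult.assoc)
    have "K^t0 * K^(N-t0) \<le> (M * 2^N) * K^(N-t0)" using Sc unfolding e e2 .
    moreover have "K^(N-t0) > 0" unfolding K_def by simp
    ultimately have A: "K^t0 \<le> M * 2^N" by (rule mult_right_le_imp_le)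
    have B: "2^(3*N) \<le> K^t0" unfolding K_def power_mult[symmetric]
      by (rule power_increasing) (use mt0 in auto)
    have N3: "3*N = N + N + N" by simp
    have C: "(2::nat)^(3*N) = (2^N * 2^N) * 2^N" unfolding N3 by (simp only: power_add)
    have "(2^N * 2^N) * 2^N \<le> M * 2^N" using A B C by linarith
    then show ?thesis by (rule mult_right_le_imp_le) simp
  qed
  have M2: "M \<ge> 2"
  proof -
    have p: "(2::nat) \<le> 2^N" using power_increasing[OF N1, of "2::nat"] by simp
    have p2: "(2::nat)^N \<le> 2^N * 2^N" by simp
    have "(2::nat) \<le> 2^N * 2^N" using p p2 by linarith
    then show ?thesis using MN by linarith
  qed
  obtain h where h: "bij_betw h {1..M} S" using ex_bij_betw_nat_finite_1[OF fS] unfolding M_def by blast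
  define G where "G i u = min (h i u) n" for i u
  have Gn: "\<forall>i u. G i u \<le> n" unfolding G_def by simp
  have GU: "G i u = h i u" if "i \<in> {1..M}" "u \<in> U" for i u
  proof -
    have "h i \<in> U \<rightarrow>\<^sub>E {..<K}" using h that S unfolding bij_betw_def by blast
    then have "h i u < K" using that by blast
    then show ?thesis unfolding G_def K_def using n1 by simp
  qed
  define f where "f = enc n r x0 G"
  define D where "D = dec q n r G"
  have code: "is_det_idf_code q n l M f D"
    unfolding is_det_idf_code_def
  proof (intro conjI ballI allI impI)
    fix i j ys xs
    show "f i j ys xs \<in> blocks q n" unfolding f_def enc_def
      using x0 wblk_blocks[OF _ q] Gn by auto
  next
    fix i show "D i \<subseteq> block_seqs q n l" unfolding D_def dec_def lr by auto
  qed
  have rate: "real M \<ge> 2 powr (real q powr (R * real l * real n))"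
  proof -
    have qn: "q^n \<le> co * 2^(m*q)" using x0b unfolding co_def Ob_def n1 by (simp add: power_mult)
    have mqr: "m * q * r \<le> n" using big unfolding n_def r_def by simp
    have "(q^n)^r \<le> (co * 2^(m*q))^r" using qn by (rule power_mono) simp
    also have "\<dots> = N * 2^(m*q*r)" unfolding NU by (simp add: power_mult_distrib power_mult)
    also have "2^(m*q*r) \<le> (2::nat)^n" using mqr by (intro power_increasing) auto
    also have "(2::nat)^n \<le> q^n" using q by (intro power_mono) auto
    finally have A: "q^(r*n) \<le> N * q^n" by (simp add: power_mult mult.commute)
    have rr: "r*n = (r-1)*n + n" using r2 by (cases r) auto
    have "q^(r*n) = q^((r-1)*n) * q^n" unfolding rr by (rule power_add)
    with A have "q^((r-1)*n) * q^n \<le> N * q^n" by simp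
    moreover have "q^n > 0" using q by simp
    ultimately have B: "q^((r-1)*n) \<le> N" by (rule mult_right_le_imp_le)
    have "real q powr (R * real l * real n) \<le> real q powr (real ((r-1)*n))"
    proof (rule powr_mono)
      have "R * real l * real n \<le> (real l - 2) * real n" using Rl by (intro mult_right_mono) auto
      also have "\<dots> = real ((r-1)*n)" using r2 lr by (simp add: of_nat_diff)
      finally show "R * real l * real n \<le> real ((r-1)*n)" .
    qed (use q in simp)
    also have "\<dots> = real q ^ ((r-1)*n)" by (rule powr_realpow) (use q in simp)
    also have "\<dots> = real (q^((r-1)*n))" by simp
    also have "\<dots> \<le> real N" using B by simp
    finally have C: "real q powr (R * real l * real n) \<le> real N" .
    have "2 powr (real q powr (R * real l * real n)) \<le> 2 powr (real N)" using C by simp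
    also have "\<dots> = real (2^N)" by (simp add: powr_realpow)
    also have "\<dots> \<le> real M" using MN by (simp add: le_trans[OF _ MN])
    finally show ?thesis .
  qed
  have t1: "idf_type1 q n l M f D = 0"
  proof -
    have "{idf_prob q n l f i (- D i) | i. i \<in> {1..M}} = {0}"
      using M2 type1_zero[OF x0 Gn q] unfolding f_def D_def lr by force
    then show ?thesis unfolding idf_type1_def by simp
  qed
  define T where "T = {idf_prob q n l f i (D k) | i k. i \<in> {1..M} \<and> k \<in> {1..M} \<and> i \<noteq> k}"
  have Tb: "\<forall>x\<in>T. 0 \<le> x \<and> x \<le> 3 / real m"
  proof
    fix x assume "x \<in> T"
    then obtain i k where ik: "i \<in> {1..M}" "k \<in> {1..M}" "i \<noteq> k" "x = idf_prob q n l f i (D k)"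
      unfolding T_def by blast
    have x0': "x = (\<Sum>ys\<in>block_seqs q n l \<inter> D k. Pm n r x0 G i ys)"
      unfolding ik(4) f_def lr by (rule prob_eq[OF x0 Gn q])
    have "0 \<le> x" unfolding x0' by (intro sum_nonneg Pm_nonneg)
    moreover have "x \<le> 3 / real m"
    proof -
      have "x \<le> real (card {u. length u = r \<and> set u \<subseteq> orb n x0 \<and> G i u = G k u}) * (1 / real co)^r"
        unfolding ik(4) f_def D_def lr co_def Ob_def by (rule type2_bound[OF x0 Gn q])
      also have "{u. length u = r \<and> set u \<subseteq> orb n x0 \<and> G i u = G k u} = {u\<in>U. h i u = h k u}"
      proof (rule Collect_cong)
        fix u
        show "(length u = r \<and> set u \<subseteq> orb n x0 \<and> G i u = G k u) \<longleftrightarrow> (u \<in> U \<and> h i u = h k u)"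
        proof (cases "u \<in> U")
          case True
          have "length u = r \<and> set u \<subseteq> orb n x0" using True unfolding U_def Ob_def by simp
          then show ?thesis using GU[OF ik(1) True] GU[OF ik(2) True] True by simp
        next
          case False
          then have "\<not> (length u = r \<and> set u \<subseteq> orb n x0)" unfolding U_def Ob_def by simp
          then show ?thesis using False by blast
        qed
      qed
      also have "card {u\<in>U. h i u = h k u} \<le> t0 - 1"
      proof -
        have hi: "h i \<in> S" by (rule bij_betw_apply[OF h ik(1)])
        have hk: "h k \<in> S" by (rule bij_betw_apply[OF h ik(2)])
        have hne: "h i \<noteq> h k" by (rule inj_on_contraD[OF bij_betw_imp_inj_on[OF h] ik(3) ik(1) ik(2)])
        have "card {u\<in>U. h i u = h k u} < t0" using Sd hi hk hne by blast
        then show ?thesis by linarith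
      qed
      then have "real (card {u\<in>U. h i u = h k u}) * (1 / real co)^r \<le> real (t0 - 1) * (1 / real co)^r"
        by (intro mult_right_mono) auto
      also have "\<dots> = real (t0 - 1) / real N" unfolding NU by (simp add: power_one_over divide_simps)
      also have "\<dots> \<le> 3 / real m"
      proof -
        have "real m * real (t0 - 1) \<le> 3 * real N" using mt1 by (metis of_nat_le_iff of_nat_mult of_nat_numeral)
        then show ?thesis using N1 m4 by (simp add: divide_simps mult.commute)
      qed
      finally show ?thesis .
    qed
    ultimately show "0 \<le> x \<and> x \<le> 3 / real m" by simp
  qed
  have fT: "finite T"
  proof -
    have "T = (\<lambda>(i,k). idf_prob q n l f i (D k)) ` {(i,k). i \<in> {1..M} \<and> k \<in> {1..M} \<and> i \<noteq> k}"
      unfolding T_def by auto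
    moreover have "finite {(i,k). i \<in> {1..M} \<and> k \<in> {1..M} \<and> i \<noteq> k}"
      by (rule finite_subset[of _ "{1..M} \<times> {1..M}"]) auto
    ultimately show ?thesis by simp
  qed
  have neT: "T \<noteq> {}"
  proof -
    have "idf_prob q n l f 1 (D 2) \<in> T" unfolding T_def using M2 by force
    then show ?thesis by blast
  qed
  have t2: "idf_type2 q n l M f D = Max T" unfolding idf_type2_def T_def ..
  have "Max T \<le> 3 / real m" using Tb fT neT by simp
  moreover have "0 \<le> Max T"
  proof -
    obtain x where "x \<in> T" using neT by blast
    then show ?thesis using Tb fT Max_ge[OF fT] by (meson order_trans)
  qed
  ultimately have t2a: "0 \<le> idf_type2 q n l M f D" "idf_type2 q n l M f D \<le> 3 / real m"
    unfolding t2 by simp_all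
  show ?thesis
    by (rule exI[of _ M], rule exI[of _ f], rule exI[of _ D]) (use code rate t1 t2a in \<open>simp add: n_def\<close>)
qed



lemma sq_le_pow: "m \<ge> 4 \<Longrightarrow> m * m \<le> (2::nat)^m"
proof (induction m rule: dec_induct)
  case base then show ?case by simp
next
  case (step k)
  have "Suc k * Suc k = k * k + 2 * k + 1" by simp
  also have "\<dots> \<le> k * k + k * k"
  proof -
    have "4 * k \<le> k * k" using mult_le_mono1[OF step(1), of k] .
    then show ?thesis using step(1) by linarith
  qed
  also have "\<dots> \<le> 2^k + 2^k" using step(3) by simp
  finally show ?case by simp
qed

lemma big_ok: "m \<ge> 4 \<Longrightarrow> m \<ge> c + 1 \<Longrightarrow> m * c + 1 \<le> (2::nat)^m"
proof -
  assume m4: "m \<ge> 4" and mc: "m \<ge> c + 1"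
  have "m * c + 1 \<le> m * (c + 1)" using m4 by simp
  also have "\<dots> \<le> m * m" using mc by (rule mult_le_mono2)
  also have "\<dots> \<le> 2^m" using sq_le_pow[OF m4] .
  finally show ?thesis .
qed

theorem theorem3:
  fixes q l :: nat and R :: real
  assumes "q \<ge> 2" and "0 < R" and "R < 1" and "real l > 2 / (1 - R)"
  shows "\<exists>(ns :: nat \<Rightarrow> nat) (M :: nat \<Rightarrow> nat)
            (f :: nat \<Rightarrow> nat \<Rightarrow> nat \<Rightarrow> nat list list \<Rightarrow> nat list list \<Rightarrow> nat list)
            (D :: nat \<Rightarrow> nat \<Rightarrow> nat list list set).
     filterlim ns at_top at_top
   \<and> (\<forall>i. is_det_idf_code q (ns i) l (M i) (f i) (D i)
          \<and> real (M i) \<ge> 2 powr (real q powr (R * real l * real (ns i)))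
          \<and> idf_type1 q (ns i) l (M i) (f i) (D i) = 0)
   \<and> (\<lambda>i. idf_type2 q (ns i) l (M i) (f i) (D i)) \<longlonglongrightarrow> 0"
proof -
  have pos: "0 < 1 - R" using assms by simp
  have l1: "real l * (1 - R) > 2" using assms(4) pos by (simp add: divide_less_eq)
  have e: "real l * (1 - R) = real l - R * real l" by (simp add: right_diff_distrib mult.commute)
  have Rl: "R * real l \<le> real l - 2" using l1 e by linarith
  have "0 \<le> R * real l" using assms(2) by simp
  then have "real l > 2" using l1 e by linarith
  then have l3: "l \<ge> 3" by simp
  define c where "c = q * (l - 1)"
  define m0 where "m0 = max 4 (c + 1)"
  have P: "\<forall>m\<in>{m0..}. \<exists>x :: nat \<times> (nat \<Rightarrow> nat \<Rightarrow> nat list list \<Rightarrow> nat list list \<Rightarrow> nat list) \<times> (nat \<Rightarrow> nat list list set).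
      is_det_idf_code q (2^m - 1) l (fst x) (fst (snd x)) (snd (snd x))
     \<and> real (fst x) \<ge> 2 powr (real q powr (R * real l * real (2^m - 1)))
     \<and> idf_type1 q (2^m - 1) l (fst x) (fst (snd x)) (snd (snd x)) = 0
     \<and> 0 \<le> idf_type2 q (2^m - 1) l (fst x) (fst (snd x)) (snd (snd x))
     \<and> idf_type2 q (2^m - 1) l (fst x) (fst (snd x)) (snd (snd x)) \<le> 3 / real m"
  proof
    fix m :: nat assume "m \<in> {m0..}"
    then have m4: "m \<ge> 4" and mc: "m \<ge> c + 1" unfolding m0_def by auto
    have big: "m * q * (l - 1) + 1 \<le> 2^m" using big_ok[OF m4 mc] unfolding c_def by (simp add: mult.assoc)
    obtain M f D where "is_det_idf_code q (2^m - 1) l M f D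
     \<and> real M \<ge> 2 powr (real q powr (R * real l * real (2^m - 1)))
     \<and> idf_type1 q (2^m - 1) l M f D = 0
     \<and> 0 \<le> idf_type2 q (2^m - 1) l M f D \<and> idf_type2 q (2^m - 1) l M f D \<le> 3 / real m"
      using main_m[OF assms(1) l3 Rl m4 big] by blast
    then show "\<exists>x :: nat \<times> (nat \<Rightarrow> nat \<Rightarrow> nat list list \<Rightarrow> nat list list \<Rightarrow> nat list) \<times> (nat \<Rightarrow> nat list list set).
      is_det_idf_code q (2^m - 1) l (fst x) (fst (snd x)) (snd (snd x))
     \<and> real (fst x) \<ge> 2 powr (real q powr (R * real l * real (2^m - 1)))
     \<and> idf_type1 q (2^m - 1) l (fst x) (fst (snd x)) (snd (snd x)) = 0
     \<and> 0 \<le> idf_type2 q (2^m - 1) l (fst x) (fst (snd x)) (snd (snd x))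
     \<and> idf_type2 q (2^m - 1) l (fst x) (fst (snd x)) (snd (snd x)) \<le> 3 / real m"
      by (intro exI[of _ "(M, f, D)"]) simp
  qed
  then obtain X where X: "\<forall>m\<in>{m0..}.
      is_det_idf_code q (2^m - 1) l (fst (X m)) (fst (snd (X m))) (snd (snd (X m)))
     \<and> real (fst (X m)) \<ge> 2 powr (real q powr (R * real l * real (2^m - 1)))
     \<and> idf_type1 q (2^m - 1) l (fst (X m)) (fst (snd (X m))) (snd (snd (X m))) = 0
     \<and> 0 \<le> idf_type2 q (2^m - 1) l (fst (X m)) (fst (snd (X m))) (snd (snd (X m)))
     \<and> idf_type2 q (2^m - 1) l (fst (X m)) (fst (snd (X m))) (snd (snd (X m))) \<le> 3 / real m"
    by (rule bchoice[elim_format]) blast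
  define ns where "ns i = (2::nat)^(i + m0) - 1" for i
  define M where "M i = fst (X (i + m0))" for i
  define f where "f i = fst (snd (X (i + m0)))" for i
  define D where "D i = snd (snd (X (i + m0)))" for i
  have Xi: "is_det_idf_code q (ns i) l (M i) (f i) (D i)
     \<and> real (M i) \<ge> 2 powr (real q powr (R * real l * real (ns i)))
     \<and> idf_type1 q (ns i) l (M i) (f i) (D i) = 0
     \<and> 0 \<le> idf_type2 q (ns i) l (M i) (f i) (D i)
     \<and> idf_type2 q (ns i) l (M i) (f i) (D i) \<le> 3 / real (i + m0)" for i
    unfolding ns_def M_def f_def D_def using X[rule_format, of "i + m0"] by simp
  have lim_ns: "filterlim ns at_top at_top"
    unfolding filterlim_at_top
  proof
    fix Z :: nat
    show "eventually (\<lambda>i. Z \<le> ns i) at_top" unfolding eventually_at_top_linorder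
    proof (intro exI allI impI)
      fix i assume "Z \<le> i"
      have "i + m0 < 2^(i + m0)" by (rule less_exp)
      then show "Z \<le> ns i" unfolding ns_def using \<open>Z \<le> i\<close> by linarith
    qed
  qed
  have lim3: "(\<lambda>i. 3 / real (i + m0)) \<longlonglongrightarrow> 0"
    using LIMSEQ_ignore_initial_segment[OF lim_const_over_n[of "3::real"], of m0] by simp
  have lim: "(\<lambda>i. idf_type2 q (ns i) l (M i) (f i) (D i)) \<longlonglongrightarrow> 0"
    by (rule tendsto_sandwich[OF _ _ tendsto_const lim3]) (use Xi in auto)
  show ?thesis
    by (rule exI[of _ ns], rule exI[of _ M], rule exI[of _ f], rule exI[of _ D]) (use lim_ns lim Xi in blast)
qed


end
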